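(* Let $r\ge0$ and let $P$ be a finite nonempty subset of $\mathbb{R}$ with $m=\min(P)$. Then \[\mathrm{AR}_r(P)\simeq\bigvee_{p\in P,\ m<p\le m+r}\mathrm{susp}\bigl(\mathrm{AR}_r(\{q\in P\mid q>p+r\})\bigr).\]
   Context: For a subset $P$ of a metric space with metric $d$ and $r\ge0$, the anti-Rips complex $\mathrm{AR}_r(P)$ is the simplicial complex with vertex set $P$ whose simplices are the finite subsets of $P$ in which any two distinct points $p,q$ satisfy $d(p,q)>r$; on $\mathbb{R}$, $d(p,q)=|p-q|$. $\mathrm{AR}_r(\emptyset)$ is the empty complex, $\mathrm{susp}(\emptyset)=S^0$, and a wedge over an empty index set is a point. *)

theory Defs
  imports "HOL-Analysis.Analysis"
begin

definition anti_rips :: "real \<Rightarrow> 'a::metric_space set \<Rightarrow> 'a set set" where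
  "anti_rips r P = {\<sigma>. \<sigma> \<subseteq> P \<and> finite \<sigma> \<and>
                     (\<forall>p\<in>\<sigma>. \<forall>q\<in>\<sigma>. p \<noteq> q \<longrightarrow> dist p q > r)}"

definition geom_realization :: "'a set \<Rightarrow> 'a set set \<Rightarrow> ('a \<Rightarrow> real) topology" where
  "geom_realization V K = subtopology (powertop_real V)
     {f \<in> topspace (powertop_real V). (\<forall>v\<in>V. f v \<ge> 0) \<and> finite {v\<in>V. f v \<noteq> 0} \<and>
        (\<Sum>v\<in>{v\<in>V. f v \<noteq> 0}. f v) = 1 \<and> {v\<in>V. f v \<noteq> 0} \<in> K}"

definition quotient_topology :: "'a topology \<Rightarrow> ('a \<Rightarrow> 'b) \<Rightarrow> 'b set \<Rightarrow> 'b topology" where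
  "quotient_topology X f S =
     topology (\<lambda>U. U \<subseteq> S \<and> openin X {x \<in> topspace X. f x \<in> U})"

text \<open>Unreduced suspension: X \<times> [-1,1] with X \<times> {1} and X \<times> {-1} each collapsed
to a point (North, South). For X empty this is the two-point discrete space S^0.\<close>
datatype 'a susp = North | South | Mid 'a real

definition susp_map :: "'a \<times> real \<Rightarrow> 'a susp" where
  "susp_map = (\<lambda>(x,t). if t = 1 then North else if t = -1 then South else Mid x t)"

definition suspension :: "'a topology \<Rightarrow> 'a susp topology" where
  "suspension X = quotient_topology (prod_topology X (top_of_set {-1..1})) susp_map
      ({North, South} \<union> susp_map ` topspace (prod_topology X (top_of_set {-1..1})))"

text \<open>Wedge of a family of pointed spaces (X i, b i), i \<in> I: the disjoint sum with all
base points identified to one point None. Over an empty index set it is a point.\<close>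
definition wedge :: "('i \<Rightarrow> 'a topology) \<Rightarrow> ('i \<Rightarrow> 'a) \<Rightarrow> 'i set \<Rightarrow> ('i \<times> 'a) option topology" where
  "wedge X b I = quotient_topology (sum_topology X I)
      (\<lambda>(i,x). if x = b i then None else Some (i,x))
      (insert None ((\<lambda>(i,x). if x = b i then None else Some (i,x)) ` topspace (sum_topology X I)))"

end

theory Submission
  imports Defs
begin


lemma quotient_istopology:
  "istopology (\<lambda>U. U \<subseteq> S \<and> openin X {x \<in> topspace X. f x \<in> U})"
  unfolding istopology_def
proof (rule conjI; intro allI impI)
  fix U V assume A: "U \<subseteq> S \<and> openin X {x \<in> topspace X. f x \<in> U}" and B: "V \<subseteq> S \<and> openin X {x \<in> topspace X. f x \<in> V}"
  have e: "{x \<in> topspace X. f x \<in> U \<inter> V} = {x \<in> topspace X. f x \<in> U} \<inter> {x \<in> topspace X. f x \<in> V}" by auto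
  show "U \<inter> V \<subseteq> S \<and> openin X {x \<in> topspace X. f x \<in> U \<inter> V}"
    using A B unfolding e by auto
next
  fix K assume K: "\<forall>U\<in>K. U \<subseteq> S \<and> openin X {x \<in> topspace X. f x \<in> U}"
  have "{x \<in> topspace X. f x \<in> \<Union>K} = (\<Union>U\<in>K. {x \<in> topspace X. f x \<in> U})" by auto
  moreover have "openin X (\<Union>U\<in>K. {x \<in> topspace X. f x \<in> U})"
    using K by (intro openin_Union) blast
  moreover have "\<Union>K \<subseteq> S" using K by blast
  ultimately show "\<Union>K \<subseteq> S \<and> openin X {x \<in> topspace X. f x \<in> \<Union>K}"
    by simp
qed

lemma openin_quotient_topology:
  "openin (quotient_topology X f S) U \<longleftrightarrow> U \<subseteq> S \<and> openin X {x \<in> topspace X. f x \<in> U}"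
  unfolding quotient_topology_def by (simp add: topology_inverse'[OF quotient_istopology])

lemma topspace_quotient_topology:
  assumes "f ` topspace X \<subseteq> S"
  shows "topspace (quotient_topology X f S) = S"
proof -
  have "{x \<in> topspace X. f x \<in> S} = topspace X" using assms by auto
  then have "openin (quotient_topology X f S) S"
    by (auto simp: openin_quotient_topology)
  then have "S \<subseteq> topspace (quotient_topology X f S)" by (rule openin_subset)
  moreover have "topspace (quotient_topology X f S) \<subseteq> S"
    using openin_topspace[of "quotient_topology X f S"] unfolding openin_quotient_topology by blast
  ultimately show ?thesis by blast
qed

lemma continuous_map_quotient_from:
  assumes "f ` topspace X \<subseteq> S" "g ` S \<subseteq> topspace Y" "continuous_map X Y (g \<circ> f)"
  shows "continuous_map (quotient_topology X f S) Y g"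
  unfolding continuous_map_def
proof (intro conjI allI impI)
  show "g \<in> topspace (quotient_topology X f S) \<rightarrow> topspace Y"
    using assms by (auto simp: topspace_quotient_topology)
next
  fix U assume U: "openin Y U"
  have "{x \<in> topspace X. f x \<in> {z \<in> topspace (quotient_topology X f S). g z \<in> U}}
       = {x \<in> topspace X. (g \<circ> f) x \<in> U}"
    using assms(1) by (auto simp: topspace_quotient_topology)
  moreover have "openin X {x \<in> topspace X. (g \<circ> f) x \<in> U}"
    using assms(3) U by (simp add: continuous_map_def)
  ultimately show "openin (quotient_topology X f S) {x \<in> topspace (quotient_topology X f S). g x \<in> U}"
    by (simp add: openin_quotient_topology topspace_quotient_topology[OF assms(1)])
qed

lemma continuous_map_quotient_map:
  assumes "f ` topspace X \<subseteq> S"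
  shows "continuous_map X (quotient_topology X f S) f"
  unfolding continuous_map_def
proof (intro conjI allI impI)
  show "f \<in> topspace X \<rightarrow> topspace (quotient_topology X f S)"
    using assms by (auto simp: topspace_quotient_topology)
next
  fix U assume "openin (quotient_topology X f S) U"
  then show "openin X {x \<in> topspace X. f x \<in> U}" by (simp add: openin_quotient_topology)
qed

lemma continuous_map_sum_topology_from:
  assumes "\<And>i. i \<in> I \<Longrightarrow> continuous_map (X i) Y (\<lambda>x. f (i,x))"
  shows "continuous_map (sum_topology X I) Y f"
  unfolding continuous_map_def
proof (intro conjI allI impI)
  show "f \<in> topspace (sum_topology X I) \<rightarrow> topspace Y"
    using assms by (fastforce simp: continuous_map_def Pi_iff)
next
  fix U assume U: "openin Y U"
  have "openin (X i) {x. (i, x) \<in> {x \<in> topspace (sum_topology X I). f x \<in> U}}" if "i \<in> I" for i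
  proof -
    have "{x. (i, x) \<in> {x \<in> topspace (sum_topology X I). f x \<in> U}} = {x \<in> topspace (X i). f (i,x) \<in> U}"
      using that by auto
    then show ?thesis using assms[OF that] U by (simp add: continuous_map_def)
  qed
  then show "openin (sum_topology X I) {x \<in> topspace (sum_topology X I). f x \<in> U}"
    by (auto simp: openin_sum_topology)
qed

lemma homotopic_from_H:
  assumes "continuous_map (prod_topology (top_of_set {0..(1::real)}) X) Y H"
    "\<And>x. x \<in> topspace X \<Longrightarrow> H (0,x) = p x" "\<And>x. x \<in> topspace X \<Longrightarrow> H (1,x) = q x"
  shows "homotopic_with (\<lambda>x. True) X Y p q"
proof -
  have "\<exists>h. continuous_map (prod_topology (top_of_set {0..(1::real)}) X) Y h \<and> (\<forall>x\<in>topspace X. h(0,x) = p x)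
     \<and> (\<forall>x\<in>topspace X. h(1,x) = q x) \<and> (\<forall>t\<in>{0..1}. True)"
    using assms by blast
  then show ?thesis by (subst homotopic_with) auto
qed

lemma heq_intro:
  assumes f: "continuous_map X Y f" and g: "continuous_map Y X g"
    and H: "continuous_map (prod_topology (top_of_set {0..(1::real)}) X) X H"
    and H0: "\<And>x. x \<in> topspace X \<Longrightarrow> H (0,x) = x"
    and H1: "\<And>x. x \<in> topspace X \<Longrightarrow> H (1,x) = g (f x)"
    and K: "continuous_map (prod_topology (top_of_set {0..(1::real)}) Y) Y K"
    and K0: "\<And>x. x \<in> topspace Y \<Longrightarrow> K (0,x) = x"
    and K1: "\<And>x. x \<in> topspace Y \<Longrightarrow> K (1,x) = f (g x)"
  shows "X homotopy_equivalent_space Y"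
proof -
  have 1: "homotopic_with (\<lambda>x. True) X X id (g \<circ> f)"
    using H H0 H1 by (intro homotopic_from_H[where H=H]) auto
  have 2: "homotopic_with (\<lambda>x. True) Y Y id (f \<circ> g)"
    using K K0 K1 by (intro homotopic_from_H[where H=K]) auto
  have h1: "homotopic_with (\<lambda>x. True) X X (g \<circ> f) id" using 1 by (subst homotopic_with_sym)
  have h2: "homotopic_with (\<lambda>x. True) Y Y (f \<circ> g) id" using 2 by (subst homotopic_with_sym)
  show ?thesis unfolding homotopy_equivalent_space_def
    using f g h1 h2 by blast
qed

lemma cm_comp3:
  fixes \<phi> :: "real \<times> real \<times> real \<Rightarrow> real"
  assumes "continuous_on D \<phi>" "continuous_map Z euclideanreal a" "continuous_map Z euclideanreal b"
    "continuous_map Z euclideanreal c" "\<And>z. z \<in> topspace Z \<Longrightarrow> (a z, b z, c z) \<in> D"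
  shows "continuous_map Z euclideanreal (\<lambda>z. \<phi> (a z, b z, c z))"
proof -
  have "continuous_map Z (prod_topology euclideanreal (prod_topology euclideanreal euclideanreal)) (\<lambda>z. (a z, b z, c z))"
    using assms(2-4) by (intro continuous_map_pairedI)
  then have "continuous_map Z euclidean (\<lambda>z. (a z, b z, c z))"
    by simp
  then have "continuous_map Z (top_of_set D) (\<lambda>z. (a z, b z, c z))"
    using assms(5) by (auto intro: continuous_map_into_subtopology)
  moreover have "continuous_map (top_of_set D) euclideanreal \<phi>" using assms(1) by simp
  ultimately have "continuous_map Z euclideanreal (\<phi> \<circ> (\<lambda>z. (a z, b z, c z)))"
    by (rule continuous_map_compose)
  then show ?thesis by (simp add: o_def)
qed



definition RT :: "real \<Rightarrow> real set \<Rightarrow> (real \<Rightarrow> real) set" where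
  "RT r V = {x \<in> extensional V. (\<forall>v\<in>V. 0 \<le> x v) \<and> sum x V = 1 \<and>
      (\<forall>a\<in>V. \<forall>b\<in>V. a \<noteq> b \<and> \<bar>a - b\<bar> \<le> r \<longrightarrow> x a = 0 \<or> x b = 0)}"

lemma realization_set_eq:
  fixes V :: "real set"
  assumes "finite V"
  shows "{f \<in> topspace (powertop_real V). (\<forall>v\<in>V. f v \<ge> 0) \<and> finite {v\<in>V. f v \<noteq> 0} \<and>
        (\<Sum>v\<in>{v\<in>V. f v \<noteq> 0}. f v) = 1 \<and> {v\<in>V. f v \<noteq> 0} \<in> anti_rips r V} = RT r V"
proof -
  have 1: "f \<in> topspace (powertop_real V) \<longleftrightarrow> f \<in> extensional V" for f by (auto simp: PiE_def)
  have 2: "(\<Sum>v\<in>{v\<in>V. f v \<noteq> 0}. f v) = sum f V" for f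
    using assms by (intro sum.mono_neutral_left) auto
  have 3: "{v\<in>V. f v \<noteq> 0} \<in> anti_rips r V \<longleftrightarrow>
      (\<forall>a\<in>V. \<forall>b\<in>V. a \<noteq> b \<and> \<bar>a - b\<bar> \<le> r \<longrightarrow> f a = 0 \<or> f b = 0)" for f
    using assms by (auto simp: anti_rips_def dist_real_def) (meson not_le)+
  show ?thesis using assms unfolding 1 2 3 RT_def by auto
qed

lemma geom_realization_eq:
  fixes V :: "real set"
  assumes "finite V"
  shows "geom_realization V (anti_rips r V) = subtopology (powertop_real V) (RT r V)"
  unfolding geom_realization_def realization_set_eq[OF assms] ..

lemma RT_sub: "RT r V \<subseteq> topspace (powertop_real V)"
  by (auto simp: RT_def PiE_def)

lemma topspace_real: "finite (V::real set) \<Longrightarrow> topspace (geom_realization V (anti_rips r V)) = RT r V"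
  using RT_sub[of r V] by (auto simp: geom_realization_eq)

lemma RT_le1:
  assumes "x \<in> RT r V" "finite V" "v \<in> V" shows "x v \<le> 1"
proof -
  have "x v \<le> sum x V" using assms by (intro member_le_sum) (auto simp: RT_def)
  then show ?thesis using assms by (simp add: RT_def)
qed

lemma compact_real:
  fixes V :: "real set"
  assumes V: "finite V" shows "compact_space (geom_realization V (anti_rips r V))"
proof -
  define Bad where "Bad = {p \<in> V \<times> V. fst p \<noteq> snd p \<and> \<bar>fst p - snd p\<bar> \<le> r}"
  have fB: "finite Bad" using V unfolding Bad_def by auto
  define d where "d x = (\<Sum>v\<in>V. \<bar>x v\<bar> - x v) + \<bar>sum x V - 1\<bar> + (\<Sum>p\<in>Bad. \<bar>x (fst p) * x (snd p)\<bar>)"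
    for x :: "real \<Rightarrow> real"
  have dc: "continuous_map (powertop_real V) euclideanreal d"
    unfolding d_def using Bad_def
    by (intro continuous_intros continuous_map_product_projection fB V) auto
  have eq: "RT r V = {x \<in> topspace (powertop_real V). d x \<in> {0}}"
  proof -
    have "d x = 0 \<longleftrightarrow> (\<forall>v\<in>V. 0 \<le> x v) \<and> sum x V = 1 \<and> (\<forall>p\<in>Bad. x (fst p) * x (snd p) = 0)" for x
    proof -
      have a: "0 \<le> (\<Sum>v\<in>V. \<bar>x v\<bar> - x v)" by (intro sum_nonneg) auto
      have b: "0 \<le> (\<Sum>p\<in>Bad. \<bar>x (fst p) * x (snd p)\<bar>)" by (intro sum_nonneg) auto
      have "d x = 0 \<longleftrightarrow> (\<Sum>v\<in>V. \<bar>x v\<bar> - x v) = 0 \<and> \<bar>sum x V - 1\<bar> = 0 \<and> (\<Sum>p\<in>Bad. \<bar>x (fst p) * x (snd p)\<bar>) = 0"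
        using a b unfolding d_def by linarith
      also have "\<dots> \<longleftrightarrow> (\<forall>v\<in>V. \<bar>x v\<bar> - x v = 0) \<and> sum x V = 1 \<and> (\<forall>p\<in>Bad. \<bar>x (fst p) * x (snd p)\<bar> = 0)"
        using V fB by (simp add: sum_nonneg_eq_0_iff)
      also have "\<dots> \<longleftrightarrow> (\<forall>v\<in>V. 0 \<le> x v) \<and> sum x V = 1 \<and> (\<forall>p\<in>Bad. x (fst p) * x (snd p) = 0)"
        by (metis abs_eq_0 abs_of_nonneg abs_ge_self diff_ge_0_iff_ge eq_iff_diff_eq_0 abs_minus_cancel abs_ge_zero abs_le_D2 add.inverse_neutral neg_0_le_iff_le)
      finally show ?thesis .
    qed
    then show ?thesis by (auto simp: RT_def Bad_def PiE_def)
  qed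
  have cl: "closedin (powertop_real V) (RT r V)"
    unfolding eq by (intro closedin_continuous_map_preimage[OF dc]) auto
  have sub: "RT r V \<subseteq> PiE V (\<lambda>_. {0..1})"
    using RT_le1[of _ r V] V by (auto simp: RT_def PiE_def)
  have "compactin (powertop_real V) (PiE V (\<lambda>_. {0..1}))"
    by (simp add: compactin_PiE)
  then have "compactin (powertop_real V) (RT r V)"
    using sub cl by (rule closed_compactin)
  then show ?thesis by (simp add: geom_realization_eq V compact_space_subtopology)
qed



locale AR =
  fixes r :: real and P :: "real set"
  assumes r0: "r \<ge> 0" and finP: "finite P" and neP: "P \<noteq> {}"
begin

definition "m = Min P"
definition "N = {p\<in>P. Min P < p \<and> p \<le> Min P + r}"
definition "Fp p = {q\<in>P. q > p + r}"
definition "T = RT r P"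
definition "XX = geom_realization P (anti_rips r P)"
definition "Lp p = geom_realization (Fp p) (anti_rips r (Fp p))"
definition "Sus p = suspension (Lp p)"
definition "qw = (\<lambda>(i::real, x::(real\<Rightarrow>real) susp). if x = North then None else Some (i,x))"
definition "W = wedge Sus (\<lambda>p. North) N"
definition sg :: "(real \<Rightarrow> real) \<Rightarrow> real" where "sg x = (\<Sum>q\<in>N. x q)"
definition "zr = (\<lambda>q\<in>P. 0::real)"
definition ept :: "real \<Rightarrow> real \<Rightarrow> (real \<Rightarrow> real) \<Rightarrow> (real \<Rightarrow> real)" where "ept p s y = (\<lambda>q\<in>P. if q = p then s else if q \<in> Fp p then s*(1-s)*y q else 0)"
definition "E' p z = (case z of North \<Rightarrow> zr | South \<Rightarrow> ept p 1 undefined | Mid y t \<Rightarrow> ept p ((1-t)/2) y)"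
definition "e w = (case w of None \<Rightarrow> zr | Some (p, z) \<Rightarrow> E' p z)"
definition "Eset = e ` topspace W"
definition "EE = subtopology (powertop_real P) Eset"
definition pw :: "(real \<Rightarrow> real) \<Rightarrow> bool" where "pw z = (\<forall>a\<in>P. \<forall>b\<in>P. a \<noteq> b \<and> \<bar>a - b\<bar> \<le> r \<longrightarrow> z a = 0 \<or> z b = 0)"

lemma mP: "m \<in> P" and m_le: "q \<in> P \<Longrightarrow> m \<le> q"
  using finP neP by (auto simp: m_def)

lemma N_sub: "N \<subseteq> P" and finN: "finite N" and finFp: "finite (Fp p)" and Fp_sub: "Fp p \<subseteq> P"
  using finP by (auto simp: N_def Fp_def)

lemma N_iff: "p \<in> N \<longleftrightarrow> p \<in> P \<and> m < p \<and> p \<le> m + r"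
  by (simp add: N_def m_def)

lemma Fp_iff: "q \<in> Fp p \<longleftrightarrow> q \<in> P \<and> p + r < q"
  by (simp add: Fp_def)

lemma cases_P: "q \<in> P \<Longrightarrow> q = m \<or> q \<in> N \<or> q \<in> Fp m"
  using m_le[of q] by (auto simp: N_iff Fp_iff)

lemma m_notin_N: "m \<notin> N" by (simp add: N_iff)

lemma m_notin_Fp: "p \<in> N \<Longrightarrow> m \<notin> Fp p"
  using r0 by (auto simp: N_iff Fp_iff)

lemma N_notin_Fp: "p \<in> N \<Longrightarrow> q \<in> N \<Longrightarrow> q \<notin> Fp p"
  by (auto simp: N_iff Fp_iff)

lemma Fp_notin_N: "p \<in> N \<Longrightarrow> q \<in> Fp p \<Longrightarrow> q \<notin> N"
  by (auto simp: N_iff Fp_iff)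

lemma Fp_mono: "p \<in> N \<Longrightarrow> Fp p \<subseteq> Fp m"
  by (auto simp: N_iff Fp_iff)

lemma Fp_m_notin_N: "q \<in> Fp m \<Longrightarrow> q \<notin> N"
  by (auto simp: N_iff Fp_iff)

lemma Fp_far: "q \<in> Fp p \<Longrightarrow> \<not> \<bar>q - p\<bar> \<le> r"
  by (auto simp: Fp_iff)

lemma N_close: "p \<in> N \<Longrightarrow> q \<in> N \<Longrightarrow> \<bar>p - q\<bar> \<le> r"
  by (auto simp: N_iff)

lemma N_close_m: "p \<in> N \<Longrightarrow> \<bar>p - m\<bar> \<le> r"
  by (auto simp: N_iff)

lemma N_close_other: "p \<in> N \<Longrightarrow> q \<in> P \<Longrightarrow> q \<notin> Fp p \<Longrightarrow> \<bar>q - p\<bar> \<le> r"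
  using m_le[of q] by (auto simp: N_iff Fp_iff)

lemma m_close: "q \<in> P \<Longrightarrow> q \<noteq> m \<Longrightarrow> \<bar>q - m\<bar> \<le> r \<Longrightarrow> q \<in> N"
  using m_le[of q] by (auto simp: N_iff)

lemma T_pw: "x \<in> T \<Longrightarrow> pw x" by (simp add: T_def RT_def pw_def)
lemma T_nonneg: "x \<in> T \<Longrightarrow> q \<in> P \<Longrightarrow> 0 \<le> x q" by (simp add: T_def RT_def)
lemma T_sum: "x \<in> T \<Longrightarrow> sum x P = 1" by (simp add: T_def RT_def)
lemma T_ext: "x \<in> T \<Longrightarrow> x \<in> extensional P" by (simp add: T_def RT_def)

lemma T_intro: "x \<in> extensional P \<Longrightarrow> (\<And>q. q \<in> P \<Longrightarrow> 0 \<le> x q) \<Longrightarrow> sum x P = 1 \<Longrightarrow> pw x \<Longrightarrow> x \<in> T"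
  by (simp add: T_def RT_def pw_def)

lemma sigma_ge: "(\<And>q. q \<in> P \<Longrightarrow> 0 \<le> x q) \<Longrightarrow> q \<in> N \<Longrightarrow> x q \<le> sg x"
  unfolding sg_def using finN N_sub by (intro member_le_sum) auto

lemma sigma_nonneg: "(\<And>q. q \<in> P \<Longrightarrow> 0 \<le> x q) \<Longrightarrow> 0 \<le> sg x"
  unfolding sg_def using N_sub by (intro sum_nonneg) auto

lemma sigma_single:
  assumes "p \<in> N" "\<And>q. q \<in> N \<Longrightarrow> q \<noteq> p \<Longrightarrow> x q = 0"
  shows "sg x = x p"
  unfolding sg_def using assms finN by (subst sum.remove[of _ p]) (auto intro!: sum.neutral)

lemma sigma_zero:
  assumes "\<And>q. q \<in> N \<Longrightarrow> x q = 0"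
  shows "sg x = 0"
  unfolding sg_def using assms by auto

lemma struct:
  assumes "pw z" "\<And>q. q \<in> P \<Longrightarrow> 0 \<le> z q"
  shows "(\<forall>q\<in>N. z q = 0) \<or> (\<exists>p\<in>N. z p > 0 \<and> (\<forall>q\<in>P. q \<noteq> p \<and> q \<notin> Fp p \<longrightarrow> z q = 0))"
proof (cases "\<forall>q\<in>N. z q = 0")
  case False
  then obtain p where p: "p \<in> N" "z p \<noteq> 0" by auto
  have "p \<in> P" using p N_sub by blast
  then have "z p > 0" using assms(2)[of p] p(2) by linarith
  moreover have "z q = 0" if "q \<in> P" "q \<noteq> p" "q \<notin> Fp p" for q
    using assms(1) p that N_close_other[OF p(1) that(1,3)] N_sub unfolding pw_def
    by (metis abs_minus_commute subsetD)
  ultimately show ?thesis using p by blast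
qed simp

lemma pc:
  assumes "pw x" and "\<And>q. q \<in> P \<Longrightarrow> z q \<noteq> 0 \<Longrightarrow> q = m \<or> x q \<noteq> 0"
    and "z m \<noteq> 0 \<Longrightarrow> \<forall>q\<in>N. z q = 0"
  shows "pw z"
  unfolding pw_def
proof (intro ballI impI)
  fix a b assume ab: "a \<in> P" "b \<in> P" "a \<noteq> b \<and> \<bar>a - b\<bar> \<le> r"
  show "z a = 0 \<or> z b = 0"
  proof (rule ccontr)
    assume nz: "\<not> (z a = 0 \<or> z b = 0)"
    show False
    proof (cases "a = m \<or> b = m")
      case True
      then show False
      proof
        assume "a = m"
        then have "b \<in> N" using m_close[of b] ab by (auto simp: abs_minus_commute)
        then show False using assms(3) nz \<open>a = m\<close> by auto
      next
        assume "b = m"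
        then have "a \<in> N" using m_close[of a] ab by (auto simp: abs_minus_commute)
        then show False using assms(3) nz \<open>b = m\<close> by auto
      qed
    next
      case False
      then have "x a \<noteq> 0" "x b \<noteq> 0" using assms(2) ab nz by auto
      then show False using assms(1) ab unfolding pw_def by blast
    qed
  qed
qed

lemma cone_in_T:
  assumes w: "w \<in> P" and V: "V \<subseteq> P" "w \<notin> V" and far: "\<And>q. q \<in> V \<Longrightarrow> \<not> \<bar>q - w\<bar> \<le> r"
    and a: "0 \<le> a" "a \<le> 1" and y: "a = 1 \<or> y \<in> RT r V"
  shows "(\<lambda>q\<in>P. if q = w then a else if q \<in> V then (1-a) * y q else 0) \<in> T"
proof (rule T_intro)
  let ?z = "(\<lambda>q\<in>P. if q = w then a else if q \<in> V then (1-a) * y q else 0)"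
  have yn: "a \<noteq> 1 \<Longrightarrow> q \<in> V \<Longrightarrow> 0 \<le> y q" for q using y by (auto simp: RT_def)
  show "?z \<in> extensional P" by simp
  show "0 \<le> ?z q" if "q \<in> P" for q
    using a yn[of q] that by (cases "a = 1") auto
  have fV: "finite V" using V finP finite_subset by blast
  have "sum ?z P = (\<Sum>q\<in>P. (if q = w then a else 0) + (if q \<in> V then (1-a) * y q else 0))"
    using V by (intro sum.cong) auto
  also have "\<dots> = a + (\<Sum>q\<in>P. if q \<in> V then (1-a) * y q else 0)"
    using w finP by (simp add: sum.distrib)
  also have "(\<Sum>q\<in>P. if q \<in> V then (1-a) * y q else 0) = (\<Sum>q\<in>V. (1-a) * y q)"
    using V finP by (simp add: sum.inter_restrict[symmetric] inf.absorb2)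
  also have "\<dots> = 1 - a"
  proof (cases "a = 1")
    case False
    then have "sum y V = 1" using y by (simp add: RT_def)
    then show ?thesis by (simp add: sum_distrib_left[symmetric])
  qed simp
  finally show "sum ?z P = 1" by simp
  show "pw ?z"
    unfolding pw_def
  proof (intro ballI impI)
    fix c d assume cd: "c \<in> P" "d \<in> P" "c \<noteq> d \<and> \<bar>c - d\<bar> \<le> r"
    show "?z c = 0 \<or> ?z d = 0"
    proof (cases "c = w \<or> d = w")
      case True
      then show ?thesis using cd far[of c] far[of d] by (auto simp: abs_minus_commute)
    next
      case False
      then show ?thesis using y cd V unfolding RT_def by auto
    qed
  qed
qed

end


context AR
begin

lemma susp_map_simps:
  "susp_map (y, 1) = North" "susp_map (y, -1) = South"
  "t \<noteq> 1 \<Longrightarrow> t \<noteq> -1 \<Longrightarrow> susp_map (y, t) = Mid y t"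
  by (auto simp: susp_map_def)

lemma topspace_Lp: "topspace (Lp p) = RT r (Fp p)"
  by (simp add: Lp_def topspace_real finFp)

lemma Sus_eq: "Sus p = quotient_topology (prod_topology (Lp p) (top_of_set {-1..1})) susp_map
      ({North, South} \<union> susp_map ` (RT r (Fp p) \<times> {-1..1}))"
  by (simp add: Sus_def suspension_def topspace_Lp)

lemma topspace_Sus: "topspace (Sus p) = {North, South} \<union> susp_map ` (RT r (Fp p) \<times> {-1..1})"
  unfolding Sus_eq by (rule topspace_quotient_topology) (auto simp: topspace_Lp)

lemma W_eq: "W = quotient_topology (sum_topology Sus N) qw (insert None (qw ` topspace (sum_topology Sus N)))"
  by (simp add: W_def wedge_def qw_def)

lemma topspace_W: "topspace W = insert None (qw ` Sigma N (topspace \<circ> Sus))"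
  by (subst W_eq, subst topspace_quotient_topology) auto

lemma ept_0: "ept p 0 y = zr" by (auto simp: ept_def zr_def intro!: restrict_ext)
lemma ept_1: "ept p 1 y = ept p 1 u" by (auto simp: ept_def intro!: restrict_ext)

lemma E'_susp: "t \<in> {-1..1} \<Longrightarrow> E' p (susp_map (y,t)) = ept p ((1-t)/2) y"
  by (auto simp: susp_map_def E'_def ept_0 intro: ept_1)

lemma e_qw: "e (qw (p, z)) = E' p z"
  by (auto simp: e_def qw_def E'_def)

lemma E_zr: "zr \<in> Eset"
  unfolding Eset_def topspace_W by (rule image_eqI[of _ _ None]) (auto simp: e_def)

lemma E_ept:
  assumes "p \<in> N" "y \<in> RT r (Fp p)" "0 \<le> s" "s \<le> 1"
  shows "ept p s y \<in> Eset"
proof -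
  have "(p, susp_map (y, 1 - 2 * s)) \<in> (SIGMA i:N. topspace (Sus i))"
    using assms by (auto simp: topspace_Sus)
  moreover have "e (qw (p, susp_map (y, 1 - 2 * s))) = ept p s y"
    using assms by (simp add: e_qw E'_susp)
  moreover note topspace_W
  ultimately show ?thesis unfolding Eset_def o_def by (metis (no_types, lifting) image_eqI insertI2)
qed

lemma E_ept1:
  assumes "p \<in> N" shows "ept p 1 u \<in> Eset"
proof -
  have "(p, South) \<in> (SIGMA i:N. topspace (Sus i))"
    using assms by (auto simp: topspace_Sus)
  moreover have "e (qw (p, South)) = ept p 1 u"
    by (simp add: e_qw E'_def ept_1)
  moreover note topspace_W
  ultimately show ?thesis unfolding Eset_def o_def by (metis (no_types, lifting) image_eqI insertI2)
qed

lemma E_cases: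
  assumes "v \<in> Eset"
  shows "v = zr \<or> (\<exists>p\<in>N. v = ept p 1 undefined) \<or>
         (\<exists>p\<in>N. \<exists>y\<in>RT r (Fp p). \<exists>s. 0 < s \<and> s < 1 \<and> v = ept p s y)"
proof -
  obtain w where w: "w \<in> topspace W" "v = e w" using assms by (auto simp: Eset_def)
  show ?thesis
  proof (cases "w = None")
    case True then show ?thesis using w by (simp add: e_def)
  next
    case False
    then obtain p z where pz: "p \<in> N" "z \<in> topspace (Sus p)" "w = qw (p,z)"
      using w(1) by (auto simp: topspace_W)
    have v: "v = E' p z" using w pz by (simp add: e_qw)
    from pz(2) consider "z = North" | "z = South" | y t where "y \<in> RT r (Fp p)" "t \<in> {-1..1}" "z = susp_map (y,t)"
      by (auto simp: topspace_Sus)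
    then show ?thesis
    proof cases
      case 1 then show ?thesis using v by (simp add: E'_def)
    next
      case 2 then show ?thesis using v pz by (auto simp: E'_def)
    next
      case 3
      show ?thesis
      proof (cases "t = 1 \<or> t = -1")
        case True
        then show ?thesis using v pz 3 by (auto simp: susp_map_def E'_def)
      next
        case False
        then have "0 < (1-t)/2" "(1-t)/2 < 1" using 3 by auto
        then show ?thesis using v pz 3 E'_susp[of t p y] by blast
      qed
    qed
  qed
qed

lemma ept_N: "p \<in> N \<Longrightarrow> q \<in> N \<Longrightarrow> ept p s y q = (if q = p then s else 0)"
  using N_sub N_notin_Fp by (auto simp: ept_def)

lemma ept_m: "p \<in> N \<Longrightarrow> ept p s y m = 0"
  using mP m_notin_N m_notin_Fp by (auto simp: ept_def)

lemma ept_F: "p \<in> N \<Longrightarrow> q \<in> Fp m \<Longrightarrow> ept p s y q = (if q \<in> Fp p then s*(1-s)*y q else 0)"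
  using Fp_sub Fp_m_notin_N by (auto simp: ept_def)

lemma sg_ept: "p \<in> N \<Longrightarrow> sg (ept p s y) = s"
  by (subst sigma_single[of p]) (auto simp: ept_N)

lemma zr_P: "q \<in> P \<Longrightarrow> zr q = 0" by (simp add: zr_def)

lemma sg_zr: "sg zr = 0"
  using N_sub by (intro sigma_zero) (auto simp: zr_def)

lemma pw_ept:
  assumes "p \<in> N" "y \<in> RT r (Fp p)"
  shows "pw (ept p s y)"
  unfolding pw_def
proof (intro ballI impI)
  fix a b assume ab: "a \<in> P" "b \<in> P" "a \<noteq> b \<and> \<bar>a - b\<bar> \<le> r"
  show "ept p s y a = 0 \<or> ept p s y b = 0"
  proof (cases "a = p \<or> b = p")
    case True
    then show ?thesis using ab Fp_far[of a p] Fp_far[of b p] by (auto simp: ept_def abs_minus_commute)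
  next
    case False
    then show ?thesis using ab assms(2) by (auto simp: ept_def RT_def)
  qed
qed

lemma ept_nonneg:
  assumes "q \<in> P" "y \<in> RT r (Fp p)" "0 \<le> s" "s \<le> 1"
  shows "0 \<le> ept p s y q"
  using assms by (auto simp: ept_def RT_def)

lemma ept_le:
  assumes "q \<in> P" "y \<in> RT r (Fp p)" "0 \<le> s" "s \<le> 1"
  shows "ept p s y q \<le> s"
proof -
  have "q \<in> Fp p \<Longrightarrow> s*(1-s)*y q \<le> s"
  proof -
    assume q: "q \<in> Fp p"
    have "0 \<le> y q" "y q \<le> 1" using assms q RT_le1[of y r "Fp p" q] finFp by (auto simp: RT_def)
    then have "(1-s)*y q \<le> 1" using assms by (simp add: mult_le_one)
    then show ?thesis using assms by (metis mult.assoc mult_left_le)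
  qed
  then show ?thesis using assms by (auto simp: ept_def)
qed

lemma Eset_ext: "Eset \<subseteq> extensional P"
  using E_cases by (fastforce simp: zr_def ept_def)

lemma topspace_EE: "topspace EE = Eset"
  using Eset_ext by (auto simp: EE_def PiE_def)

lemma topspace_XX: "topspace XX = T"
  by (simp add: XX_def T_def topspace_real finP)

lemma XX_eq: "XX = subtopology (powertop_real P) T"
  by (simp add: XX_def T_def geom_realization_eq finP)

end


context AR
begin

definition tt :: "real \<Rightarrow> real" where "tt l = min (max 0 (l/2)) (1/2)"
definition fmap :: "(real \<Rightarrow> real) \<Rightarrow> (real \<Rightarrow> real)" where
  "fmap x = (\<lambda>q\<in>P. if q \<in> N then x q else if q = m then 0 else sg x * x q)"
definition gmap :: "(real \<Rightarrow> real) \<Rightarrow> (real \<Rightarrow> real)" where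
  "gmap v = (\<lambda>q\<in>P. if q = m then max 0 (1 - 2 * sg v) else if q \<in> N then max 0 (2 * v q - 1)
       else v q / (max (sg v) (1/2) * (1 - min (sg v) (1/2))))"
definition mu :: "real \<Rightarrow> (real \<Rightarrow> real) \<Rightarrow> real" where "mu l x = min (sg x) (tt l)"
definition cc :: "real \<Rightarrow> (real \<Rightarrow> real) \<Rightarrow> real" where "cc l x = (1 - 2 * tt l + 2 * mu l x) / (1 - mu l x)"
definition Hh :: "real \<times> (real \<Rightarrow> real) \<Rightarrow> (real \<Rightarrow> real)" where
  "Hh w = (\<lambda>q\<in>P. if q = m then 2 * (tt (fst w) - mu (fst w) (snd w)) + cc (fst w) (snd w) * snd w q
      else if q \<in> N then max 0 (snd w q - tt (fst w)) / (1 - tt (fst w))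
      else cc (fst w) (snd w) * snd w q)"
definition Phi :: "real \<times> real \<times> real \<Rightarrow> real" where
  "Phi u = (case u of (l, s, z) \<Rightarrow> z * max 0 (s - tt l) / (s * (1 - tt l)^2))"
definition Kk :: "real \<times> (real \<Rightarrow> real) \<Rightarrow> (real \<Rightarrow> real)" where
  "Kk w = (\<lambda>q\<in>P. if q = m then 0 else if q \<in> N then max 0 (snd w q - tt (fst w)) / (1 - tt (fst w))
      else Phi (fst w, sg (snd w), snd w q))"
definition cone :: "real \<Rightarrow> real set \<Rightarrow> real \<Rightarrow> (real \<Rightarrow> real) \<Rightarrow> (real \<Rightarrow> real)" where
  "cone w V a y = (\<lambda>q\<in>P. if q = w then a else if q \<in> V then (1-a) * y q else 0)"

lemma tt_ge: "0 \<le> tt l" and tt_le: "tt l \<le> 1/2" and tt0: "tt 0 = 0" and tt1: "tt 1 = 1/2"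
  by (auto simp: tt_def)

lemma cone_T:
  "w \<in> P \<Longrightarrow> V \<subseteq> P \<Longrightarrow> w \<notin> V \<Longrightarrow> (\<And>q. q \<in> V \<Longrightarrow> \<not> \<bar>q - w\<bar> \<le> r) \<Longrightarrow> 0 \<le> a \<Longrightarrow> a \<le> 1
   \<Longrightarrow> a = 1 \<or> y \<in> RT r V \<Longrightarrow> cone w V a y \<in> T"
  unfolding cone_def by (rule cone_in_T)

lemma far_Fp: "p \<in> N \<Longrightarrow> q \<in> Fp p \<Longrightarrow> \<not> \<bar>q - m\<bar> \<le> r"
  using Fp_mono Fp_far by blast

lemma sg_cong: "(\<And>q. q \<in> N \<Longrightarrow> x q = x' q) \<Longrightarrow> sg x = sg x'"
  unfolding sg_def by (rule sum.cong) auto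

lemma ext_eq: "f \<in> extensional P \<Longrightarrow> g \<in> extensional P \<Longrightarrow> (\<And>q. q \<in> P \<Longrightarrow> q = m \<or> q \<in> N \<or> q \<in> Fp m \<Longrightarrow> f q = g q) \<Longrightarrow> f = g"
  using cases_P by (metis extensionalityI)

lemma sum_delta_P: "a \<in> P \<Longrightarrow> (\<Sum>q\<in>P. if q = a then c else 0) = (c::real)"
  using finP by simp

lemma fmap_T:
  assumes x: "x \<in> T" shows "fmap x \<in> Eset"
proof -
  have nn: "\<And>q. q \<in> P \<Longrightarrow> 0 \<le> x q" using x T_nonneg by auto
  from struct[OF T_pw[OF x] nn]
  show ?thesis
  proof
    assume z: "\<forall>q\<in>N. x q = 0"
    then have "sg x = 0" by (intro sigma_zero) auto
    then have "fmap x = zr" using z by (intro ext_eq) (auto simp: fmap_def zr_def)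
    then show ?thesis by (simp add: E_zr)
  next
    assume "\<exists>p\<in>N. x p > 0 \<and> (\<forall>q\<in>P. q \<noteq> p \<and> q \<notin> Fp p \<longrightarrow> x q = 0)"
    then obtain p where p: "p \<in> N" "x p > 0" and oth: "\<And>q. q \<in> P \<Longrightarrow> q \<noteq> p \<Longrightarrow> q \<notin> Fp p \<Longrightarrow> x q = 0"
      by blast
    have pP: "p \<in> P" using p N_sub by auto
    define s where "s = x p"
    have sg: "sg x = s" unfolding s_def using p N_sub N_notin_Fp oth by (intro sigma_single) auto
    have pF: "p \<notin> Fp p" using r0 by (simp add: Fp_iff)
    have "1 = sum x P" using T_sum[OF x] by simp
    also have "\<dots> = (\<Sum>q\<in>P. (if q = p then x q else 0) + (if q \<in> Fp p then x q else 0))"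
      using oth pF by (intro sum.cong) auto
    also have "\<dots> = s + sum x (Fp p)"
      using finP pP Fp_sub by (simp add: sum.distrib s_def sum.inter_restrict[symmetric] inf.absorb2)
    finally have sF: "sum x (Fp p) = 1 - s" by simp
    have s1: "s \<le> 1" using RT_le1[of x r P p] x pP finP by (simp add: T_def s_def)
    show ?thesis
    proof (cases "s = 1")
      case True
      then have "sum x (Fp p) = 0" using sF by simp
      moreover have "\<forall>q\<in>Fp p. 0 \<le> x q" using nn Fp_sub by blast
      ultimately have "\<forall>q\<in>Fp p. x q = 0" using finFp[of p] sum_nonneg_eq_0_iff by blast
      then have "fmap x = ept p 1 undefined"
        using p oth True m_notin_N mP
        by (intro ext_eq) (auto simp: fmap_def ept_def s_def dest: Fp_m_notin_N)
      then show ?thesis using E_ept1 p by simp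
    next
      case False
      then have s1': "s < 1" using s1 by simp
      define y where "y = (\<lambda>q\<in>Fp p. x q / (1 - s))"
      have yRT: "y \<in> RT r (Fp p)"
        unfolding RT_def
      proof (intro CollectI conjI ballI impI)
        show "y \<in> extensional (Fp p)" by (simp add: y_def)
        show "0 \<le> y v" if "v \<in> Fp p" for v
        proof -
          have "0 \<le> x v" using that nn Fp_sub by blast
          then show ?thesis using that s1' by (simp add: y_def)
        qed
        have "sum y (Fp p) = sum x (Fp p) / (1 - s)" by (simp add: y_def sum_divide_distrib)
        then show "sum y (Fp p) = 1" using sF s1' by simp
        fix a b assume "a \<in> Fp p" "b \<in> Fp p" "a \<noteq> b \<and> \<bar>a - b\<bar> \<le> r"
        then show "y a = 0 \<or> y b = 0" using T_pw[OF x] Fp_sub by (auto simp: pw_def y_def)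
      qed
      have "fmap x = ept p s y"
      proof (intro ext_eq)
        fix q assume q: "q \<in> P" "q = m \<or> q \<in> N \<or> q \<in> Fp m"
        show "fmap x q = ept p s y q"
          using q
        proof (elim disjE)
          assume "q = m" then show ?thesis using p m_notin_N mP by (simp add: fmap_def ept_m)
        next
          assume "q \<in> N" then show ?thesis using p q oth N_notin_Fp by (auto simp: fmap_def ept_N s_def)
        next
          assume qF: "q \<in> Fp m"
          have "q \<notin> N" using qF Fp_m_notin_N by blast
          moreover have "q \<noteq> m" using qF r0 by (auto simp: Fp_iff)
          ultimately show ?thesis using qF q oth[of q] p s1' by (auto simp: fmap_def ept_F sg y_def)
        qed
      qed (auto simp: fmap_def ept_def)
      then show ?thesis using E_ept[OF p(1) yRT] p s1 by (simp add: s_def)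
    qed
  qed
qed

lemma m_notin_Fpm: "q \<in> Fp m \<Longrightarrow> q \<noteq> m"
  using r0 by (auto simp: Fp_iff)

lemma gmap_zr: "gmap zr = cone m {} 1 y"
proof (intro ext_eq)
  fix q assume q: "q \<in> P" "q = m \<or> q \<in> N \<or> q \<in> Fp m"
  then show "gmap zr q = cone m {} 1 y q"
    using m_notin_N Fp_m_notin_N m_notin_Fpm by (auto simp: gmap_def cone_def sg_zr zr_P)
qed (auto simp: gmap_def cone_def)

lemma gmap_lo:
  assumes p: "p \<in> N" and s: "0 \<le> s" "s \<le> 1/2"
  shows "gmap (ept p s y) = cone m (Fp p) (1 - 2 * s) y"
proof (intro ext_eq)
  fix q assume q: "q \<in> P" "q = m \<or> q \<in> N \<or> q \<in> Fp m"
  show "gmap (ept p s y) q = cone m (Fp p) (1 - 2 * s) y q"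
    using q
  proof (elim disjE)
    assume "q = m" then show ?thesis using s p by (simp add: gmap_def cone_def sg_ept mP)
  next
    assume qN: "q \<in> N"
    then show ?thesis using s p m_notin_N N_notin_Fp[OF p qN] q(1)
      by (auto simp: gmap_def cone_def ept_N)
  next
    assume qF: "q \<in> Fp m"
    have "min s (1/2) = s" "max s (1/2) = 1/2" using s by auto
    then show ?thesis using qF s p q(1) m_notin_Fpm[OF qF] Fp_m_notin_N[OF qF]
      by (auto simp: gmap_def cone_def ept_F sg_ept)
  qed
qed (auto simp: gmap_def cone_def)

lemma gmap_hi:
  assumes p: "p \<in> N" and s: "1/2 \<le> s" "s \<le> 1"
  shows "gmap (ept p s y) = cone p (Fp p) (2 * s - 1) y"
proof (intro ext_eq)
  fix q assume q: "q \<in> P" "q = m \<or> q \<in> N \<or> q \<in> Fp m"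
  show "gmap (ept p s y) q = cone p (Fp p) (2 * s - 1) y q"
    using q
  proof (elim disjE)
    assume "q = m" then show ?thesis using s p m_notin_N m_notin_Fp[OF p]
      by (auto simp: gmap_def cone_def sg_ept mP)
  next
    assume qN: "q \<in> N"
    then show ?thesis using s p m_notin_N N_notin_Fp[OF p qN] q(1)
      by (auto simp: gmap_def cone_def ept_N)
  next
    assume qF: "q \<in> Fp m"
    have "min s (1/2) = 1/2" "max s (1/2) = s" using s by auto
    moreover have "q \<noteq> p" using qF Fp_m_notin_N p by blast
    ultimately show ?thesis using qF s p q(1) m_notin_Fpm[OF qF] Fp_m_notin_N[OF qF]
      by (auto simp: gmap_def cone_def ept_F sg_ept)
  qed
qed (auto simp: gmap_def cone_def)

lemma gmap_E:
  assumes v: "v \<in> Eset" shows "gmap v \<in> T"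
  using E_cases[OF v]
proof (elim disjE bexE exE conjE)
  assume "v = zr" then show ?thesis using mP by (simp add: gmap_zr[of undefined]) (rule cone_T, auto)
next
  fix p assume p: "p \<in> N" "v = ept p 1 undefined"
  then show ?thesis using N_sub Fp_sub Fp_far[of _ p] r0
    by (simp add: gmap_hi) (rule cone_T, auto simp: Fp_iff)
next
  fix p y s assume p: "p \<in> N" and y: "y \<in> RT r (Fp p)" and s: "0 < s" "s < 1" and v: "v = ept p s y"
  have pP: "p \<in> P" using p N_sub by blast
  show ?thesis
  proof (cases "s \<le> 1/2")
    case True
    then show ?thesis unfolding v using p s y mP Fp_sub m_notin_Fp[OF p] far_Fp[OF p]
      by (subst gmap_lo) (auto intro!: cone_T)
  next
    case False
    then show ?thesis unfolding v using p s y pP Fp_sub Fp_far[of _ p] r0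
      by (subst gmap_hi) (auto intro!: cone_T simp: Fp_iff)
  qed
qed

end


context AR
begin

lemma Hh_m: "Hh (l,x) m = 2 * (tt l - mu l x) + cc l x * x m"
  using mP by (simp add: Hh_def)
lemma Hh_N: "q \<in> N \<Longrightarrow> Hh (l,x) q = max 0 (x q - tt l) / (1 - tt l)"
  using N_sub m_notin_N by (auto simp: Hh_def)
lemma Hh_F: "q \<in> Fp m \<Longrightarrow> Hh (l,x) q = cc l x * x q"
  using Fp_sub Fp_m_notin_N m_notin_Fpm by (auto simp: Hh_def)

lemma mu_props:
  assumes "0 \<le> sg x"
  shows "0 \<le> mu l x" "mu l x \<le> tt l" "mu l x \<le> 1/2" "0 < 1 - mu l x" "0 \<le> cc l x"
proof -
  show a: "0 \<le> mu l x" "mu l x \<le> tt l" using assms tt_ge[of l] by (auto simp: mu_def)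
  show b: "mu l x \<le> 1/2" using a tt_le[of l] by linarith
  show c: "0 < 1 - mu l x" using b by linarith
  have "0 \<le> 1 - 2 * tt l + 2 * mu l x" using a tt_le[of l] by linarith
  then show "0 \<le> cc l x" using c by (simp add: cc_def)
qed

lemma Hh_T:
  assumes x: "x \<in> T" shows "Hh (l, x) \<in> T"
proof -
  have nn: "\<And>q. q \<in> P \<Longrightarrow> 0 \<le> x q" using x T_nonneg by auto
  have s0: "0 \<le> sg x" using sigma_nonneg nn by blast
  note mp = mu_props[OF s0, of l]
  have t: "0 \<le> tt l" "tt l \<le> 1/2" by (rule tt_ge, rule tt_le)
  have t1: "0 < 1 - tt l" using t by linarith
  show ?thesis
  proof (rule T_intro)
    show "Hh (l, x) \<in> extensional P" by (simp add: Hh_def)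
  next
    fix q assume q: "q \<in> P"
    then consider "q = m" | "q \<in> N" | "q \<in> Fp m" using cases_P by blast
    then show "0 \<le> Hh (l, x) q"
    proof cases
      case 1 then show ?thesis using mp nn[OF q] by (simp add: Hh_m)
    next
      case 2 then show ?thesis using t1 by (simp add: Hh_N)
    next
      case 3 then show ?thesis using mp nn[OF q] by (simp add: Hh_F)
    qed
  next
    show "pw (Hh (l, x))"
    proof (rule pc[OF T_pw[OF x]])
      fix q assume q: "q \<in> P" "Hh (l, x) q \<noteq> 0"
      then consider "q = m" | "q \<in> N" | "q \<in> Fp m" using cases_P by blast
      then show "q = m \<or> x q \<noteq> 0"
      proof cases
        case 2 then show ?thesis using q t by (auto simp: Hh_N)
      next
        case 3 then show ?thesis using q by (auto simp: Hh_F)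
      qed simp
    next
      assume hm: "Hh (l, x) m \<noteq> 0"
      show "\<forall>q\<in>N. Hh (l, x) q = 0"
      proof
        fix q assume qN: "q \<in> N"
        show "Hh (l, x) q = 0"
        proof (cases "x m = 0")
          case True
          then have "mu l x \<noteq> tt l" using hm by (auto simp: Hh_m)
          then have "mu l x < tt l" using mp(2) by linarith
          then have "sg x < tt l" by (auto simp: mu_def)
          moreover have "x q \<le> sg x" using sigma_ge[of x q, OF nn qN] by simp
          ultimately show ?thesis using qN by (simp add: Hh_N)
        next
          case False
          then have "x q = 0" using T_pw[OF x] qN N_sub mP N_close_m[OF qN] m_notin_N
            unfolding pw_def by (metis subsetD)
          then show ?thesis using qN t by (simp add: Hh_N)
        qed
      qed
    qed
  next
    have pP: "\<And>p. p \<in> N \<Longrightarrow> p \<in> P" using N_sub by blast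
    from struct[OF T_pw[OF x] nn]
    show "sum (Hh (l, x)) P = 1"
    proof
      assume z: "\<forall>q\<in>N. x q = 0"
      then have sg0: "sg x = 0" by (intro sigma_zero) auto
      then have mu0: "mu l x = 0" using t by (simp add: mu_def)
      have "sum (Hh (l, x)) P = (\<Sum>q\<in>P. (if q = m then 2 * tt l else 0) + (1 - 2 * tt l) * x q)"
      proof (rule sum.cong)
        fix q assume q: "q \<in> P"
        then consider "q = m" | "q \<in> N" | "q \<in> Fp m" using cases_P by blast
        then show "Hh (l, x) q = (if q = m then 2 * tt l else 0) + (1 - 2 * tt l) * x q"
        proof cases
          case 1 then show ?thesis using mu0 by (simp add: Hh_m cc_def)
        next
          case 2 then show ?thesis using z t m_notin_N by (auto simp: Hh_N)
        next
          case 3 then show ?thesis using mu0 m_notin_Fpm[OF 3] by (simp add: Hh_F cc_def)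
        qed
      qed simp
      also have "\<dots> = 2 * tt l + (1 - 2 * tt l) * sum x P"
        using mP finP by (simp add: sum.distrib sum_distrib_left)
      finally show ?thesis using T_sum[OF x] by simp
    next
      assume "\<exists>p\<in>N. x p > 0 \<and> (\<forall>q\<in>P. q \<noteq> p \<and> q \<notin> Fp p \<longrightarrow> x q = 0)"
      then obtain p where p: "p \<in> N" "x p > 0" and oth: "\<And>q. q \<in> P \<Longrightarrow> q \<noteq> p \<Longrightarrow> q \<notin> Fp p \<Longrightarrow> x q = 0"
        by blast
      define s where "s = x p"
      have sg: "sg x = s" unfolding s_def using p N_sub N_notin_Fp oth by (intro sigma_single) auto
      have xm: "x m = 0" using oth[of m] mP m_notin_N p m_notin_Fp by auto
      have xN: "\<And>q. q \<in> N \<Longrightarrow> q \<noteq> p \<Longrightarrow> x q = 0" using oth pP N_notin_Fp p by blast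
      have sumx: "sum x P = 1" using T_sum[OF x] .
      show ?thesis
      proof (cases "s \<le> tt l")
        case True
        then have mus: "mu l x = s" by (simp add: mu_def sg)
        define c where "c = cc l x"
        have c: "c = (1 - 2 * tt l + 2 * s) / (1 - s)" by (simp add: c_def cc_def mus)
        have s1: "s < 1" using True t by linarith
        have "sum (Hh (l, x)) P = (\<Sum>q\<in>P. (if q = m then 2 * (tt l - s) else 0) + c * (x q - (if q = p then s else 0)))"
        proof (rule sum.cong)
          fix q assume q: "q \<in> P"
          then consider "q = m" | "q \<in> N" | "q \<in> Fp m" using cases_P by blast
          then show "Hh (l, x) q = (if q = m then 2 * (tt l - s) else 0) + c * (x q - (if q = p then s else 0))"
          proof cases
            case 1 then show ?thesis using mus xm p m_notin_N by (auto simp: Hh_m c_def)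
          next
            case 2 then show ?thesis using True xN[of q] t m_notin_N by (auto simp: Hh_N s_def)
          next
            case 3 then show ?thesis using m_notin_Fpm[OF 3] Fp_m_notin_N[OF 3] p
              by (auto simp: Hh_F c_def)
          qed
        qed simp
        also have "\<dots> = 2 * (tt l - s) + c * (sum x P - s)"
          using mP pP[OF p(1)] finP by (simp add: sum.distrib sum_distrib_left[symmetric] sum_subtractf)
        also have "\<dots> = 1" using s1 by (simp add: sumx c field_simps)
        finally show ?thesis .
      next
        case False
        then have mus: "mu l x = tt l" by (simp add: mu_def sg)
        have c: "cc l x = 1 / (1 - tt l)" using t1 by (simp add: cc_def mus)
        have "sum (Hh (l, x)) P = (\<Sum>q\<in>P. (if q = p then (s - tt l) / (1 - tt l) else 0) + (x q - (if q = p then s else 0)) / (1 - tt l))"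
        proof (rule sum.cong)
          fix q assume q: "q \<in> P"
          then consider "q = m" | "q \<in> N" | "q \<in> Fp m" using cases_P by blast
          then show "Hh (l, x) q = (if q = p then (s - tt l) / (1 - tt l) else 0) + (x q - (if q = p then s else 0)) / (1 - tt l)"
          proof cases
            case 1 then show ?thesis using mus xm p m_notin_N by (auto simp: Hh_m)
          next
            case 2 then show ?thesis using False xN[of q] t t1 by (auto simp: Hh_N s_def)
          next
            case 3 then show ?thesis using m_notin_Fpm[OF 3] Fp_m_notin_N[OF 3] p c
              by (auto simp: Hh_F)
          qed
        qed simp
        also have "\<dots> = (s - tt l) / (1 - tt l) + (sum x P - s) / (1 - tt l)"
          using pP[OF p(1)] finP by (simp add: sum.distrib sum_divide_distrib[symmetric] sum_subtractf)
        also have "\<dots> = 1" using t1 by (simp add: sumx field_simps)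
        finally show ?thesis .
      qed
    qed
  qed
qed

end


context AR
begin

lemma Hh0: assumes x: "x \<in> T" shows "Hh (0, x) = x"
proof (rule ext_eq)
  have nn: "\<And>q. q \<in> P \<Longrightarrow> 0 \<le> x q" using x T_nonneg by auto
  have s0: "0 \<le> sg x" using sigma_nonneg nn by blast
  have mu0: "mu 0 x = 0" and cc0: "cc 0 x = 1" using s0 by (auto simp: mu_def cc_def tt0)
  fix q assume q: "q \<in> P" "q = m \<or> q \<in> N \<or> q \<in> Fp m"
  then show "Hh (0, x) q = x q" using nn[OF q(1)] mu0 cc0
    by (auto simp: Hh_m Hh_N Hh_F tt0)
qed (use x T_ext in \<open>auto simp: Hh_def\<close>)

lemma sg_fmap: "sg (fmap x) = sg x"
  using N_sub by (intro sg_cong) (auto simp: fmap_def)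

lemma Hh1: assumes x: "x \<in> T" shows "Hh (1, x) = gmap (fmap x)"
proof (rule ext_eq)
  have nn: "\<And>q. q \<in> P \<Longrightarrow> 0 \<le> x q" using x T_nonneg by auto
  have s0: "0 \<le> sg x" using sigma_nonneg nn by blast
  fix q assume q: "q \<in> P" "q = m \<or> q \<in> N \<or> q \<in> Fp m"
  then consider "q = m" | "q \<in> N" | "q \<in> Fp m" by blast
  then show "Hh (1, x) q = gmap (fmap x) q"
  proof cases
    case 1
    have "cc 1 x * x m = 0"
    proof (cases "x m = 0")
      case False
      then have "\<forall>q\<in>N. x q = 0" using T_pw[OF x] N_sub mP N_close_m m_notin_N
        unfolding pw_def by (metis subsetD)
      then have "sg x = 0" by (intro sigma_zero) auto
      then show ?thesis by (simp add: cc_def mu_def tt1)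
    qed simp
    moreover have "1 - 2 * min (sg x) (1/2) = max 0 (1 - 2 * sg x)" by (simp add: min_def max_def)
    ultimately show ?thesis using 1 mP by (simp add: Hh_m gmap_def sg_fmap tt1 mu_def)
  next
    case 2 then show ?thesis using N_sub m_notin_N
      by (auto simp: Hh_N gmap_def fmap_def tt1 max_def)
  next
    case 3
    have qm: "q \<noteq> m" "q \<notin> N" using 3 m_notin_Fpm Fp_m_notin_N by auto
    have "cc 1 x = sg x / (max (sg x) (1/2) * (1 - min (sg x) (1/2)))"
    proof (cases "sg x \<le> 1/2")
      case True then show ?thesis by (simp add: cc_def mu_def tt1 field_simps)
    next
      case False then show ?thesis by (simp add: cc_def mu_def tt1 field_simps)
    qed
    then show ?thesis using 3 qm q(1) by (simp add: Hh_F gmap_def sg_fmap, simp add: fmap_def)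
  qed
qed (auto simp: Hh_def gmap_def)

lemma Kk_zr: "Kk (l, zr) = zr"
proof (rule ext_eq)
  fix q assume q: "q \<in> P" "q = m \<or> q \<in> N \<or> q \<in> Fp m"
  have t: "0 \<le> tt l" by (rule tt_ge)
  show "Kk (l, zr) q = zr q" using q t by (auto simp: Kk_def zr_P sg_zr Phi_def)
qed (auto simp: Kk_def zr_def)

lemma Kk_ept1: assumes p: "p \<in> N" shows "Kk (l, ept p 1 u) = ept p 1 u"
proof (rule ext_eq)
  fix q assume q: "q \<in> P" "q = m \<or> q \<in> N \<or> q \<in> Fp m"
  have t: "0 \<le> tt l" "tt l \<le> 1/2" by (rule tt_ge, rule tt_le)
  show "Kk (l, ept p 1 u) q = ept p 1 u q"
    using q
  proof (elim disjE)
    assume "q = m" then show ?thesis using p by (simp add: Kk_def ept_m mP)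
  next
    assume qN: "q \<in> N"
    then show ?thesis using p t m_notin_N N_sub by (auto simp: Kk_def ept_N)
  next
    assume qF: "q \<in> Fp m"
    then show ?thesis using p m_notin_Fpm[OF qF] Fp_m_notin_N[OF qF] q(1)
      by (auto simp: Kk_def ept_F Phi_def)
  qed
qed (auto simp: Kk_def ept_def)

lemma Kk_ept:
  assumes p: "p \<in> N" and s: "0 < s" "s \<le> 1"
  shows "Kk (l, ept p s y) = ept p (max 0 (s - tt l) / (1 - tt l)) y"
proof (rule ext_eq)
  fix q assume q: "q \<in> P" "q = m \<or> q \<in> N \<or> q \<in> Fp m"
  have t: "0 \<le> tt l" "tt l \<le> 1/2" by (rule tt_ge, rule tt_le)
  have t1: "0 < 1 - tt l" using t by linarith
  show "Kk (l, ept p s y) q = ept p (max 0 (s - tt l) / (1 - tt l)) y q"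
    using q
  proof (elim disjE)
    assume "q = m" then show ?thesis using p by (simp add: Kk_def ept_m mP)
  next
    assume qN: "q \<in> N"
    then show ?thesis using p t m_notin_N N_sub by (auto simp: Kk_def ept_N)
  next
    assume qF: "q \<in> Fp m"
    have base: "Kk (l, ept p s y) q = Phi (l, s, ept p s y q)"
      using qF m_notin_Fpm[OF qF] Fp_m_notin_N[OF qF] q(1) p by (simp add: Kk_def sg_ept)
    show ?thesis
    proof (cases "q \<in> Fp p")
      case False then show ?thesis using base p qF by (simp add: ept_F Phi_def)
    next
      case True
      show ?thesis
      proof (cases "s \<le> tt l")
        case True' : True
        then show ?thesis using base p qF True by (simp add: ept_F Phi_def)
      next
        case False
        then have mx: "max 0 (s - tt l) = s - tt l" by simp
        define d where "d = 1 - tt l"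
        have d0: "d \<noteq> 0" using t1 by (simp add: d_def)
        have tl: "tt l = 1 - d" by (simp add: d_def)
        have "s * (1 - s) * y q * (s - tt l) / (s * d^2) = (s - tt l) / d * (1 - (s - tt l) / d) * y q"
          unfolding tl using s d0 by (simp add: field_simps power2_eq_square)
        then have "Phi (l, s, s * (1 - s) * y q) = (s - tt l) / (1 - tt l) * (1 - (s - tt l) / (1 - tt l)) * y q"
          using mx by (simp add: Phi_def d_def)
        then show ?thesis using base p qF True mx by (simp add: ept_F)
      qed
    qed
  qed
qed (auto simp: Kk_def ept_def)

lemma Kk_E: assumes v: "v \<in> Eset" shows "Kk (l, v) \<in> Eset"
  using E_cases[OF v]
proof (elim disjE bexE exE conjE)
  assume "v = zr" then show ?thesis by (simp add: Kk_zr E_zr)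
next
  fix p assume "p \<in> N" "v = ept p 1 undefined" then show ?thesis by (simp add: Kk_ept1 E_ept1)
next
  fix p y s assume p: "p \<in> N" and y: "y \<in> RT r (Fp p)" and s: "0 < s" "s < 1" and v: "v = ept p s y"
  have t: "0 \<le> tt l" "tt l \<le> 1/2" by (rule tt_ge, rule tt_le)
  have "0 \<le> max 0 (s - tt l) / (1 - tt l)" "max 0 (s - tt l) / (1 - tt l) \<le> 1"
    using s t by (auto simp: field_simps max_def)
  then show ?thesis unfolding v using p s y by (simp add: Kk_ept E_ept)
qed

lemma Kk0: assumes v: "v \<in> Eset" shows "Kk (0, v) = v"
  using E_cases[OF v]
proof (elim disjE bexE exE conjE)
  assume "v = zr" then show ?thesis by (simp add: Kk_zr)
next
  fix p assume "p \<in> N" "v = ept p 1 undefined" then show ?thesis by (simp add: Kk_ept1)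
next
  fix p y s assume p: "p \<in> N" and s: "0 < s" "s < 1" and v: "v = ept p s y"
  then show ?thesis by (simp add: Kk_ept tt0)
qed

lemma fmap_cone_m:
  assumes V: "\<And>q. q \<in> V \<Longrightarrow> q \<notin> N" shows "fmap (cone m V a y) = zr"
proof -
  have "sg (cone m V a y) = 0"
    using m_notin_N N_sub V by (intro sigma_zero) (auto simp: cone_def)
  then show ?thesis
    using m_notin_N N_sub V by (intro ext_eq) (auto simp: fmap_def cone_def zr_def)
qed

lemma Kk1: assumes v: "v \<in> Eset" shows "Kk (1, v) = fmap (gmap v)"
  using E_cases[OF v]
proof (elim disjE bexE exE conjE)
  assume "v = zr"
  moreover have "fmap (cone m {} 1 undefined) = zr" by (rule fmap_cone_m) auto
  ultimately show ?thesis by (simp add: Kk_zr gmap_zr[of undefined])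
next
  fix p assume p: "p \<in> N" "v = ept p 1 undefined"
  have pP: "p \<in> P" using p N_sub by blast
  have sgc: "sg (cone p (Fp p) 1 undefined) = 1"
    using p pP N_sub by (subst sigma_single[of p]) (auto simp: cone_def dest: N_notin_Fp)
  have "fmap (cone p (Fp p) 1 undefined) = ept p 1 undefined"
  proof (rule ext_eq)
    fix q assume q: "q \<in> P" "q = m \<or> q \<in> N \<or> q \<in> Fp m"
    then show "fmap (cone p (Fp p) 1 undefined) q = ept p 1 undefined q"
      using p pP sgc m_notin_N m_notin_Fp[OF p(1)] Fp_m_notin_N m_notin_Fpm
      by (auto simp: fmap_def cone_def ept_def dest: N_notin_Fp)
  qed (auto simp: fmap_def ept_def)
  then show ?thesis using p by (simp add: Kk_ept1 gmap_hi)
next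
  fix p y s assume p: "p \<in> N" and y: "y \<in> RT r (Fp p)" and s: "0 < s" "s < 1" and v: "v = ept p s y"
  have pP: "p \<in> P" using p N_sub by blast
  show ?thesis
  proof (cases "s \<le> 1/2")
    case True
    then have "max 0 (s - 1/2) / (1 - 1/2) = (0::real)" by simp
    moreover have "fmap (cone m (Fp p) (1 - 2 * s) y) = zr" using p by (intro fmap_cone_m) (auto dest: Fp_notin_N)
    ultimately show ?thesis using p s True unfolding v by (simp add: Kk_ept tt1 gmap_lo ept_0)
  next
    case False
    have sgc: "sg (cone p (Fp p) (2 * s - 1) y) = 2 * s - 1"
      using p pP N_sub by (subst sigma_single[of p]) (auto simp: cone_def dest: N_notin_Fp)
    have "fmap (cone p (Fp p) (2 * s - 1) y) = ept p (2 * s - 1) y"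
    proof (rule ext_eq)
      fix q assume q: "q \<in> P" "q = m \<or> q \<in> N \<or> q \<in> Fp m"
      then show "fmap (cone p (Fp p) (2 * s - 1) y) q = ept p (2 * s - 1) y q"
        using p pP sgc m_notin_N m_notin_Fp[OF p(1)] Fp_m_notin_N m_notin_Fpm
        by (simp add: fmap_def sgc, auto simp: cone_def ept_def algebra_simps dest: N_notin_Fp)
    qed (auto simp: fmap_def ept_def)
    moreover have "max 0 (s - 1/2) / (1 - 1/2) = 2 * s - 1" using False by simp
    ultimately show ?thesis using p s False unfolding v by (simp add: Kk_ept tt1 gmap_hi mult.commute)
  qed
qed

end


context AR
begin

lemma Phi_alt: "Phi u = snd (snd u) * max 0 (fst (snd u) - tt (fst u)) / (fst (snd u) * (1 - tt (fst u))^2)"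
  by (simp add: Phi_def split: prod.splits)

lemma Phi_bound:
  assumes "0 \<le> z" "z \<le> s" shows "\<bar>Phi (l, s, z)\<bar> \<le> 4 * z"
proof (cases "s = 0")
  case True then show ?thesis using assms by (simp add: Phi_def)
next
  case False
  then have s: "0 < s" using assms by simp
  define t where "t = tt l"
  define d where "d = 1 - t"
  define M where "M = max 0 (s - t)"
  have t: "0 \<le> t" "t \<le> 1/2" unfolding t_def by (rule tt_ge, rule tt_le)
  have d: "1/2 \<le> d" using t by (simp add: d_def)
  have dd: "1/4 \<le> d^2" using d power_mono[of "1/2" d 2] by (simp add: power2_eq_square)
  have M: "0 \<le> M" "M \<le> s" using t s by (auto simp: M_def)
  have Phi: "Phi (l, s, z) = z * M / (s * d^2)" by (simp add: Phi_def M_def d_def t_def)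
  have pos: "0 < s * d^2" using s d by simp
  have nn: "0 \<le> z * M / (s * d^2)" using assms M pos by simp
  have "z * M / (s * d^2) \<le> z * s / (s * d^2)"
    using assms M pos by (intro divide_right_mono mult_left_mono) auto
  also have "\<dots> = z / d^2" using s by simp
  also have "\<dots> \<le> z / (1/4)" using assms dd by (intro divide_left_mono) auto
  also have "\<dots> = 4 * z" by simp
  finally show ?thesis using nn Phi by simp
qed

lemma tt_cont: "continuous (at u) (\<lambda>u. tt (fst u))"
  unfolding tt_def by (intro continuous_intros) auto

lemma Phi_cont: "continuous_on {u. 0 \<le> snd (snd u) \<and> snd (snd u) \<le> fst (snd u)} Phi"
  unfolding continuous_on_eq_continuous_within
proof (intro ballI)
  let ?D = "{u::real\<times>real\<times>real. 0 \<le> snd (snd u) \<and> snd (snd u) \<le> fst (snd u)}"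
  fix u assume u: "u \<in> ?D"
  obtain l s z where luz: "u = (l, s, z)" by (cases u) auto
  show "continuous (at u within ?D) Phi"
  proof (cases "s = 0")
    case False
    have t1: "0 < 1 - tt l" using tt_le[of l] by linarith
    have "continuous (at u) (\<lambda>u. snd (snd u) * max 0 (fst (snd u) - tt (fst u)) / (fst (snd u) * (1 - tt (fst u))^2))"
      using False t1 luz unfolding tt_def by (intro continuous_intros) auto
    then have "continuous (at u) Phi" by (simp add: Phi_alt[abs_def])
    then show ?thesis by (rule continuous_at_imp_continuous_at_within)
  next
    case True
    then have z0: "z = 0" using u luz by auto
    then have P0: "Phi u = 0" by (simp add: luz Phi_def)
    have ev: "eventually (\<lambda>w. norm (Phi w) \<le> 4 * snd (snd w)) (at u within ?D)"
      unfolding eventually_at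
      by (rule exI[of _ 1]) (auto intro!: Phi_bound)
    have "((\<lambda>w. 4 * snd (snd w)) \<longlongrightarrow> 4 * snd (snd u)) (at u within ?D)"
      by (intro tendsto_intros)
    then have lim: "((\<lambda>w. 4 * snd (snd w)) \<longlongrightarrow> 0) (at u within ?D)" using z0 luz by simp
    have "(Phi \<longlongrightarrow> 0) (at u within ?D)" by (rule Lim_null_comparison[OF ev lim])
    then show ?thesis using P0 by (simp add: continuous_within)
  qed
qed

end


context AR
begin

lemma cm_proj: "q \<in> P \<Longrightarrow> continuous_map (subtopology (powertop_real P) S) euclideanreal (\<lambda>x. x q)"
  by (rule continuous_map_from_subtopology[OF continuous_map_product_projection])

lemma cm_sg: "continuous_map (subtopology (powertop_real P) S) euclideanreal sg"
  unfolding sg_def[abs_def] using N_sub finN by (intro continuous_map_sum) (auto intro: cm_proj)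

lemma cm_pproj: "q \<in> P \<Longrightarrow> continuous_map (prod_topology (top_of_set {0..(1::real)}) (subtopology (powertop_real P) S)) euclideanreal (\<lambda>w. snd w q)"
  using continuous_map_compose[OF continuous_map_snd cm_proj] by (simp add: o_def)

lemma cm_psg: "continuous_map (prod_topology (top_of_set {0..(1::real)}) (subtopology (powertop_real P) S)) euclideanreal (\<lambda>w. sg (snd w))"
  using continuous_map_compose[OF continuous_map_snd cm_sg] by (simp add: o_def)

lemma cm_fst: "continuous_map (prod_topology (top_of_set {0..(1::real)}) Y) euclideanreal fst"
  by (rule continuous_map_into_fulltopology[OF continuous_map_fst])

lemma cm_tt: "continuous_map X euclideanreal f \<Longrightarrow> continuous_map X euclideanreal (\<lambda>x. tt (f x))"
  unfolding tt_def by (intro continuous_intros) auto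

lemma topspace_subP: "S \<subseteq> extensional P \<Longrightarrow> topspace (subtopology (powertop_real P) S) = S"
  by (auto simp: PiE_def)

lemma T_extP: "T \<subseteq> extensional P" by (auto simp: T_def RT_def)

lemma fmap_cont: "continuous_map XX EE fmap"
  unfolding EE_def XX_eq
proof (rule continuous_map_into_subtopology)
  show "fmap \<in> topspace (subtopology (powertop_real P) T) \<rightarrow> Eset"
    using fmap_T by (auto simp: topspace_subP[OF T_extP])
  show "continuous_map (subtopology (powertop_real P) T) (powertop_real P) fmap"
    unfolding continuous_map_componentwise
  proof (intro conjI ballI)
    show "fmap ` topspace (subtopology (powertop_real P) T) \<subseteq> extensional P" by (auto simp: fmap_def)
    fix q assume q: "q \<in> P"
    show "continuous_map (subtopology (powertop_real P) T) euclideanreal (\<lambda>x. fmap x q)"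
      using q by (simp add: fmap_def) (intro conjI impI continuous_intros cm_proj cm_sg; simp)
  qed
qed

lemma gmap_cont: "continuous_map EE XX gmap"
  unfolding EE_def XX_eq
proof (rule continuous_map_into_subtopology)
  show "gmap \<in> topspace (subtopology (powertop_real P) Eset) \<rightarrow> T"
    using gmap_E by (auto simp: topspace_subP[OF Eset_ext])
  show "continuous_map (subtopology (powertop_real P) Eset) (powertop_real P) gmap"
    unfolding continuous_map_componentwise
  proof (intro conjI ballI)
    show "gmap ` topspace (subtopology (powertop_real P) Eset) \<subseteq> extensional P" by (auto simp: gmap_def)
    fix q assume q: "q \<in> P"
    have nz: "max (sg v) (1/2) * (1 - min (sg v) (1/2)) \<noteq> 0" for v
    proof -
      have "0 < max (sg v) (1/2)" "0 < 1 - min (sg v) (1/2)" by auto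
      then show ?thesis by simp
    qed
    show "continuous_map (subtopology (powertop_real P) Eset) euclideanreal (\<lambda>x. gmap x q)"
      using q nz by (simp add: gmap_def) (intro conjI impI continuous_intros cm_proj cm_sg; simp)
  qed
qed

lemma Hh_cont: "continuous_map (prod_topology (top_of_set {0..(1::real)}) XX) XX Hh"
  unfolding XX_eq
proof (rule continuous_map_into_subtopology)
  show "Hh \<in> topspace (prod_topology (top_of_set {0..(1::real)}) (subtopology (powertop_real P) T)) \<rightarrow> T"
    using Hh_T by (auto simp: topspace_subP[OF T_extP])
  show "continuous_map (prod_topology (top_of_set {0..(1::real)}) (subtopology (powertop_real P) T)) (powertop_real P) Hh"
    unfolding continuous_map_componentwise
  proof (intro conjI ballI)
    show "Hh ` topspace (prod_topology (top_of_set {0..(1::real)}) (subtopology (powertop_real P) T)) \<subseteq> extensional P"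
      by (auto simp: Hh_def)
    fix q assume q: "q \<in> P"
    have nz1: "1 - min (sg x) (tt l) \<noteq> 0" for x l using tt_le[of l] by linarith
    have nz2: "1 - tt l \<noteq> 0" for l using tt_le[of l] by linarith
    show "continuous_map (prod_topology (top_of_set {0..(1::real)}) (subtopology (powertop_real P) T)) euclideanreal (\<lambda>x. Hh x q)"
      using q nz1 nz2 unfolding Hh_def cc_def mu_def
      by (simp, intro conjI impI continuous_intros cm_proj cm_pproj cm_psg cm_tt cm_fst; simp)
  qed
qed

lemma E_coord: assumes v: "v \<in> Eset" and q: "q \<in> Fp m" shows "0 \<le> v q \<and> v q \<le> sg v"
  using E_cases[OF v]
proof (elim disjE bexE exE conjE)
  assume "v = zr"
  moreover have "q \<in> P" using q Fp_sub by blast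
  ultimately show ?thesis by (simp add: zr_P sg_zr)
next
  fix p assume p: "p \<in> N" "v = ept p 1 undefined" then show ?thesis using q by (simp add: ept_F sg_ept)
next
  fix p y s assume p: "p \<in> N" and y: "y \<in> RT r (Fp p)" and s: "0 < s" "s < 1" and v: "v = ept p s y"
  have "q \<in> P" using q Fp_sub by blast
  then show ?thesis unfolding v using p y s ept_nonneg[of q y p s] ept_le[of q y p s] by (simp add: sg_ept)
qed

lemma Kk_cont: "continuous_map (prod_topology (top_of_set {0..(1::real)}) EE) EE Kk"
  unfolding EE_def
proof (rule continuous_map_into_subtopology)
  show "Kk \<in> topspace (prod_topology (top_of_set {0..(1::real)}) (subtopology (powertop_real P) Eset)) \<rightarrow> Eset"
    using Kk_E by (auto simp: topspace_subP[OF Eset_ext])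
  show "continuous_map (prod_topology (top_of_set {0..(1::real)}) (subtopology (powertop_real P) Eset)) (powertop_real P) Kk"
    unfolding continuous_map_componentwise
  proof (intro conjI ballI)
    show "Kk ` topspace (prod_topology (top_of_set {0..(1::real)}) (subtopology (powertop_real P) Eset)) \<subseteq> extensional P"
      by (auto simp: Kk_def)
    fix q assume q: "q \<in> P"
    have nz2: "1 - tt l \<noteq> 0" for l using tt_le[of l] by linarith
    consider "q = m" | "q \<in> N" | "q \<in> Fp m" using cases_P[OF q] by blast
    then show "continuous_map (prod_topology (top_of_set {0..(1::real)}) (subtopology (powertop_real P) Eset)) euclideanreal (\<lambda>x. Kk x q)"
    proof cases
      case 1 then show ?thesis using q by (simp add: Kk_def)
    next
      case 2 then show ?thesis using q nz2 m_notin_N unfolding Kk_def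
        by (auto intro!: continuous_intros cm_proj cm_pproj cm_psg cm_tt cm_fst)
    next
      case 3
      have qq: "q \<noteq> m" "q \<notin> N" using 3 m_notin_Fpm Fp_m_notin_N by auto
      have "continuous_map (prod_topology (top_of_set {0..(1::real)}) (subtopology (powertop_real P) Eset)) euclideanreal
              (\<lambda>w. Phi (fst w, sg (snd w), snd w q))"
        by (rule cm_comp3[OF Phi_cont cm_fst cm_psg cm_pproj[OF q]])
           (auto simp: topspace_subP[OF Eset_ext] dest: E_coord[OF _ 3])
      then show ?thesis using q qq by (simp add: Kk_def)
    qed
  qed
qed

end


context AR
begin

lemma XX_EE: "XX homotopy_equivalent_space EE"
proof (rule heq_intro[OF fmap_cont gmap_cont Hh_cont _ _ Kk_cont])
  show "\<And>x. x \<in> topspace XX \<Longrightarrow> Hh (0, x) = x" by (simp add: topspace_XX Hh0)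
  show "\<And>x. x \<in> topspace XX \<Longrightarrow> Hh (1, x) = gmap (fmap x)" by (simp add: topspace_XX Hh1)
  show "\<And>x. x \<in> topspace EE \<Longrightarrow> Kk (0, x) = x" by (simp add: topspace_EE Kk0)
  show "\<And>x. x \<in> topspace EE \<Longrightarrow> Kk (1, x) = fmap (gmap x)" by (simp add: topspace_EE Kk1)
qed

lemma compact_Sus: "compact_space (Sus p)"
proof -
  let ?Y = "prod_topology (Lp p) (top_of_set {-1..(1::real)})"
  have cY: "compact_space ?Y"
    using compact_real[OF finFp[of p], of r]
    by (simp add: compact_space_prod_topology Lp_def compact_space_subtopology)
  have sm: "continuous_map ?Y (Sus p) susp_map"
    unfolding Sus_eq by (rule continuous_map_quotient_map) (auto simp: topspace_Lp)
  have "compactin (Sus p) (susp_map ` topspace ?Y)"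
    using cY sm by (simp add: compact_space_def image_compactin)
  moreover have "compactin (Sus p) {North, South}"
    by (rule finite_imp_compactin) (auto simp: topspace_Sus)
  ultimately have "compactin (Sus p) ({North, South} \<union> susp_map ` topspace ?Y)"
    by (rule compactin_Un[rotated])
  moreover have "{North, South} \<union> susp_map ` topspace ?Y = topspace (Sus p)"
    by (simp add: topspace_Sus topspace_Lp)
  ultimately show ?thesis by (simp add: compact_space_def)
qed

lemma qw_cont: "p \<in> N \<Longrightarrow> continuous_map (Sus p) W (\<lambda>z. qw (p, z))"
proof -
  assume p: "p \<in> N"
  have "continuous_map (sum_topology Sus N) W qw"
    unfolding W_eq by (rule continuous_map_quotient_map) auto
  then show ?thesis
    using continuous_map_compose[OF continuous_map_component_injection[OF p, of Sus]]
    by (simp add: o_def)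
qed

lemma compact_W: "compact_space W"
proof -
  have eq: "topspace W = {None} \<union> \<Union>((\<lambda>p. (\<lambda>z. qw (p, z)) ` topspace (Sus p)) ` N)"
    unfolding topspace_W by force
  have "compactin W {None}" by (rule finite_imp_compactin) (auto simp: topspace_W)
  moreover have "compactin W (\<Union>((\<lambda>p. (\<lambda>z. qw (p, z)) ` topspace (Sus p)) ` N))"
  proof (rule compactin_Union)
    show "finite ((\<lambda>p. (\<lambda>z. qw (p, z)) ` topspace (Sus p)) ` N)" using finN by simp
  next
    fix S assume "S \<in> (\<lambda>p. (\<lambda>z. qw (p, z)) ` topspace (Sus p)) ` N"
    then obtain p where p: "p \<in> N" "S = (\<lambda>z. qw (p, z)) ` topspace (Sus p)" by blast
    show "compactin W S" unfolding p(2)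
      using compact_Sus[of p] qw_cont[OF p(1)] by (simp add: compact_space_def image_compactin)
  qed
  ultimately show ?thesis unfolding compact_space_def eq by (rule compactin_Un)
qed

lemma Hausdorff_EE: "Hausdorff_space EE"
  unfolding EE_def
  by (intro Hausdorff_space_subtopology) (simp add: Hausdorff_space_product_topology)

lemma ept_cont:
  "continuous_map (prod_topology (Lp p) (top_of_set {-1..(1::real)})) (powertop_real P) (\<lambda>w. ept p ((1 - snd w)/2) (fst w))"
  unfolding continuous_map_componentwise
proof (intro conjI ballI)
  show "(\<lambda>w. ept p ((1 - snd w) / 2) (fst w)) ` topspace (prod_topology (Lp p) (top_of_set {-1..1})) \<subseteq> extensional P"
    by (auto simp: ept_def)
  fix q assume q: "q \<in> P"
  have c1: "continuous_map (prod_topology (Lp p) (top_of_set {-1..(1::real)})) euclideanreal snd"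
    by (rule continuous_map_into_fulltopology[OF continuous_map_snd])
  have c2: "continuous_map (prod_topology (Lp p) (top_of_set {-1..(1::real)})) euclideanreal (\<lambda>w. fst w q)"
    if "q \<in> Fp p"
  proof -
    have "continuous_map (Lp p) euclideanreal (\<lambda>y. y q)"
      unfolding Lp_def geom_realization_eq[OF finFp]
      by (rule continuous_map_from_subtopology[OF continuous_map_product_projection[OF that]])
    then show ?thesis using continuous_map_compose[OF continuous_map_fst] by (simp add: o_def)
  qed
  show "continuous_map (prod_topology (Lp p) (top_of_set {-1..1})) euclideanreal (\<lambda>x. ept p ((1 - snd x) / 2) (fst x) q)"
    using q by (simp add: ept_def) (intro conjI impI continuous_intros c1 c2; simp)
qed

lemma E'_cont: "continuous_map (Sus p) (powertop_real P) (E' p)"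
  unfolding Sus_eq
proof (rule continuous_map_quotient_from)
  show "susp_map ` topspace (prod_topology (Lp p) (top_of_set {-1..1})) \<subseteq> {North, South} \<union> susp_map ` (RT r (Fp p) \<times> {-1..1})"
    by (auto simp: topspace_Lp)
  show "E' p ` ({North, South} \<union> susp_map ` (RT r (Fp p) \<times> {-1..1})) \<subseteq> topspace (powertop_real P)"
    by (auto simp: E'_def susp_map_def ept_def zr_def PiE_def)
  show "continuous_map (prod_topology (Lp p) (top_of_set {-1..1})) (powertop_real P) (E' p \<circ> susp_map)"
    by (rule continuous_map_eq[OF ept_cont]) (auto simp: E'_susp topspace_Lp)
qed

lemma e_cont: "continuous_map W EE e"
  unfolding W_eq
proof (rule continuous_map_quotient_from)
  show "qw ` topspace (sum_topology Sus N) \<subseteq> insert None (qw ` topspace (sum_topology Sus N))" by auto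
  have tW: "insert None (qw ` topspace (sum_topology Sus N)) = topspace W" by (auto simp: topspace_W)
  show "e ` insert None (qw ` topspace (sum_topology Sus N)) \<subseteq> topspace EE"
    unfolding tW by (simp add: topspace_EE Eset_def)
  show "continuous_map (sum_topology Sus N) EE (e \<circ> qw)"
    unfolding EE_def
  proof (rule continuous_map_into_subtopology)
    show "e \<circ> qw \<in> topspace (sum_topology Sus N) \<rightarrow> Eset"
    proof (rule funcsetI)
      fix x assume "x \<in> topspace (sum_topology Sus N)"
      then have "qw x \<in> topspace W" using tW by blast
      then show "(e \<circ> qw) x \<in> Eset" by (simp add: Eset_def)
    qed
    show "continuous_map (sum_topology Sus N) (powertop_real P) (e \<circ> qw)"
      by (rule continuous_map_sum_topology_from) (simp add: o_def e_qw E'_cont)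
  qed
qed

end


context AR
begin

lemma topW_cases:
  assumes "w \<in> topspace W"
  shows "w = None \<or> (\<exists>p\<in>N. w = Some (p, South)) \<or>
         (\<exists>p\<in>N. \<exists>y\<in>RT r (Fp p). \<exists>t. -1 < t \<and> t < 1 \<and> w = Some (p, Mid y t))"
proof -
  consider "w = None" | p z where "p \<in> N" "z \<in> topspace (Sus p)" "w = qw (p, z)"
    using assms by (auto simp: topspace_W)
  then show ?thesis
  proof cases
    case 2
    note pz = 2
    from pz(2) consider "z = North" | "z = South" | y t where "y \<in> RT r (Fp p)" "t \<in> {-1..1}" "z = susp_map (y,t)"
      by (auto simp: topspace_Sus)
    then show ?thesis
    proof cases
      case 1 then show ?thesis using pz by (simp add: qw_def)
    next
      case 2 then show ?thesis using pz by (auto simp: qw_def)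
    next
      case 3
      show ?thesis
      proof (cases "t = 1 \<or> t = -1")
        case True then show ?thesis using pz 3 by (auto simp: qw_def susp_map_def)
      next
        case False then show ?thesis using pz 3 by (auto simp: qw_def susp_map_def)
      qed
    qed
  qed simp
qed

lemma ept_at_p: "p \<in> N \<Longrightarrow> ept p s y p = s"
  using N_sub by (auto simp: ept_def)

lemma ept_inj:
  assumes p: "p \<in> N" "p' \<in> N" and s: "0 < s" and eq: "ept p s y = ept p' s' y'"
  shows "p = p' \<and> s = s'"
proof -
  have "ept p' s' y' p = (if p = p' then s' else 0)"
    using p ept_N[OF p(2) p(1)] by simp
  then have "s = (if p = p' then s' else 0)" using eq ept_at_p[OF p(1)] by metis
  then show ?thesis using s by (auto split: if_splits)
qed

lemma ept_inj_y:
  assumes p: "p \<in> N" and s: "0 < s" "s < 1" and y: "y \<in> extensional (Fp p)" "y' \<in> extensional (Fp p)"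
    and eq: "ept p s y = ept p s y'"
  shows "y = y'"
proof (rule extensionalityI[OF y])
  fix q assume q: "q \<in> Fp p"
  have "q \<noteq> p" "q \<in> P" using q Fp_sub r0 by (auto simp: Fp_iff)
  then have "s * (1 - s) * y q = s * (1 - s) * y' q"
    using fun_cong[OF eq, of q] q by (simp add: ept_def)
  moreover have "s * (1 - s) \<noteq> 0" using s by simp
  ultimately show "y q = y' q" by simp
qed

lemma e_Some: "e (Some (p, South)) = ept p 1 undefined" "e (Some (p, Mid y t)) = ept p ((1-t)/2) y"
  by (simp_all add: e_def E'_def)

lemma inj_e: "inj_on e (topspace W)"
proof (rule inj_onI)
  fix w1 w2 assume w1: "w1 \<in> topspace W" and w2: "w2 \<in> topspace W" and eq: "e w1 = e w2"
  have rep: "w = None \<or> (\<exists>p s y. p \<in> N \<and> 0 < s \<and> s \<le> 1 \<and> e w = ept p s y \<and>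
        (s = 1 \<longrightarrow> w = Some (p, South)) \<and>
        (s < 1 \<longrightarrow> y \<in> RT r (Fp p) \<and> w = Some (p, Mid y (1 - 2 * s))))" if "w \<in> topspace W" for w
    using topW_cases[OF that]
  proof (elim disjE bexE exE conjE)
    fix p assume A: "p \<in> N" "w = Some (p, South)"
    have "p \<in> N \<and> 0 < (1::real) \<and> (1::real) \<le> 1 \<and> e w = ept p 1 undefined \<and> (1 = (1::real) \<longrightarrow> w = Some (p, South))
       \<and> ((1::real) < 1 \<longrightarrow> undefined \<in> RT r (Fp p) \<and> w = Some (p, Mid undefined (1 - 2 * 1)))"
      using A by (simp add: e_Some)
    then show ?thesis by blast
  next
    fix p y t assume A: "p \<in> N" "y \<in> RT r (Fp p)" "-1 < t" "t < 1" "w = Some (p, Mid y t)"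
    have "p \<in> N \<and> 0 < (1-t)/2 \<and> (1-t)/2 \<le> 1 \<and> e w = ept p ((1-t)/2) y \<and> ((1-t)/2 = 1 \<longrightarrow> w = Some (p, South))
       \<and> ((1-t)/2 < 1 \<longrightarrow> y \<in> RT r (Fp p) \<and> w = Some (p, Mid y (1 - 2 * ((1-t)/2))))"
      using A by (simp add: e_Some field_simps)
    then show ?thesis by blast
  qed simp
  have zr_ne: "zr \<noteq> ept p s y" if "p \<in> N" "0 < s" for p s y
  proof
    assume "zr = ept p s y"
    then have "zr p = ept p s y p" by simp
    moreover have "zr p = 0" using that N_sub by (auto simp: zr_def)
    ultimately show False using that ept_at_p[of p s y] by simp
  qed
  show "w1 = w2"
  proof (cases "w1 = None")
    case True
    then have "e w1 = zr" by (simp add: e_def)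
    then show ?thesis using rep[OF w2] eq zr_ne True by metis
  next
    case False
    then obtain p s y where A: "p \<in> N" "0 < s" "s \<le> 1" "e w1 = ept p s y"
        "s = 1 \<longrightarrow> w1 = Some (p, South)" "s < 1 \<longrightarrow> y \<in> RT r (Fp p) \<and> w1 = Some (p, Mid y (1 - 2 * s))"
      using rep[OF w1] by blast
    show ?thesis
    proof (cases "w2 = None")
      case True
      then have "e w2 = zr" by (simp add: e_def)
      then show ?thesis using A(4) eq zr_ne[OF A(1) A(2)] by metis
    next
      case False
      then obtain p' s' y' where B: "p' \<in> N" "0 < s'" "s' \<le> 1" "e w2 = ept p' s' y'"
          "s' = 1 \<longrightarrow> w2 = Some (p', South)" "s' < 1 \<longrightarrow> y' \<in> RT r (Fp p') \<and> w2 = Some (p', Mid y' (1 - 2 * s'))"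
        using rep[OF w2] by blast
      have ee: "ept p s y = ept p' s' y'" using A(4) B(4) eq by simp
      then have pp: "p = p'" "s = s'" using ept_inj[OF A(1) B(1) A(2)] by auto
      show ?thesis
      proof (cases "s = 1")
        case True then show ?thesis using A B pp by simp
      next
        case False
        then have s1: "s < 1" using A by simp
        then have "y \<in> RT r (Fp p)" "y' \<in> RT r (Fp p)" using A B pp by auto
        then have "y = y'" using ept_inj_y[OF A(1) A(2) s1] ee pp by (auto simp: RT_def)
        then show ?thesis using A B pp s1 by simp
      qed
    qed
  qed
qed

lemma W_EE: "W homeomorphic_space EE"
proof -
  have "homeomorphic_map W EE e"
  proof (rule bijective_closed_imp_homeomorphic_map[OF e_cont])
    show "closed_map W EE e" by (rule continuous_imp_closed_map[OF e_cont compact_W Hausdorff_EE])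
    show "e ` topspace W = topspace EE" by (simp add: topspace_EE Eset_def)
    show "inj_on e (topspace W)" by (rule inj_e)
  qed
  then show ?thesis by (rule homeomorphic_map_imp_homeomorphic_space)
qed

lemma main: "XX homotopy_equivalent_space W"
proof -
  have "EE homotopy_equivalent_space W"
    using homeomorphic_imp_homotopy_equivalent_space[OF W_EE] homotopy_equivalent_space_sym by blast
  then show ?thesis using XX_EE homotopy_eqv_trans by blast
qed

end

theorem proposition4p2:
  fixes r :: real and P :: "real set"
  assumes "r \<ge> 0" and "finite P" and "P \<noteq> {}"
  shows "geom_realization P (anti_rips r P) homotopy_equivalent_space
         wedge (\<lambda>p. suspension (geom_realization {q\<in>P. q > p + r} (anti_rips r {q\<in>P. q > p + r})))
               (\<lambda>p. North)
               {p\<in>P. Min P < p \<and> p \<le> Min P + r}"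
proof -
  interpret AR r P using assms by unfold_locales
  show ?thesis using main unfolding XX_def W_def Sus_def Lp_def Fp_def N_def .
qed


end
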